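(* There exists a constant $\mu$ with $0<\mu<1/2$ such that for every $r>0$ the spiral $\gamma:\mathbb{R}\to\mathbb{R}^3$, $\gamma(t)=(r\cos t,\,r\sin t,\,\mu r t)$, is self-expanded (and hence satisfies the $\lambda$-cone property for all $\lambda\in[0,1)$).
   Context: $\mathbb{R}^3$ carries the Euclidean inner product $\langle\cdot,\cdot\rangle$ and norm $\|\cdot\|$. A curve $\gamma$ defined on an interval is self-expanded if for all $t_1\le t_2\le t_3$: $\|\gamma(t_1)-\gamma(t_2)\|\le\|\gamma(t_1)-\gamma(t_3)\|$. A differentiable curve with nonvanishing derivative satisfies the $\lambda$-cone property if for all $t<\tau$: $\langle\gamma'(\tau),\gamma(t)-\gamma(\tau)\rangle\le\lambda\|\gamma'(\tau)\|\|\gamma(t)-\gamma(\tau)\|$. *)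

theory Defs
  imports "HOL-Analysis.Analysis"
begin

definition self_expanded :: "real set \<Rightarrow> (real \<Rightarrow> real^3) \<Rightarrow> bool" where
  "self_expanded I \<gamma> \<longleftrightarrow>
     (\<forall>t1\<in>I. \<forall>t2\<in>I. \<forall>t3\<in>I. t1 \<le> t2 \<and> t2 \<le> t3 \<longrightarrow>
        norm (\<gamma> t1 - \<gamma> t2) \<le> norm (\<gamma> t1 - \<gamma> t3))"

definition cone_property :: "real \<Rightarrow> real set \<Rightarrow> (real \<Rightarrow> real^3) \<Rightarrow> bool" where
  "cone_property lam I \<gamma> \<longleftrightarrow>
     (\<forall>t\<in>I. \<gamma> differentiable (at t within I) \<and> vector_derivative \<gamma> (at t within I) \<noteq> 0) \<and>
     (\<forall>t\<in>I. \<forall>\<tau>\<in>I. t < \<tau> \<longrightarrow>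
        inner (vector_derivative \<gamma> (at \<tau> within I)) (\<gamma> t - \<gamma> \<tau>)
          \<le> lam * norm (vector_derivative \<gamma> (at \<tau> within I)) * norm (\<gamma> t - \<gamma> \<tau>))"

definition spiral :: "real \<Rightarrow> real \<Rightarrow> real \<Rightarrow> real^3" where
  "spiral \<mu> r t = vector [r * cos t, r * sin t, \<mu> * r * t]"

end

theory Submission
  imports Defs
begin

lemma key_ineq:
  fixes c s :: real
  assumes s: "0 \<le> s" and c: "0 < c" and c1: "c < 1" and cp: "1 - c \<le> c * pi"
  shows "0 \<le> sin s + c * s"
proof (cases "s \<le> pi")
  case True
  then show ?thesis using sin_ge_zero[of s] s c by simp
next
  case False
  show ?thesis
  proof (cases "c * s \<ge> 1")
    case True
    then show ?thesis using sin_ge_minus_one[of s] by linarith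
  next
    case F2: False
    have e: "sin s = - sin (s - pi)" by (simp add: sin_diff)
    have l: "sin (s - pi) \<le> s - pi" using sin_x_le_x[of "s - pi"] False by simp
    have "c * (s * (1 - c)) < 1 - c"
    proof -
      have "(c * s) * (1 - c) < 1 * (1 - c)" using F2 c1 by (intro mult_strict_right_mono) auto
      thus ?thesis by (simp add: algebra_simps)
    qed
    hence "c * (s * (1 - c)) < c * pi" using cp by linarith
    hence "s * (1 - c) < pi" using c by simp
    hence "s - pi \<le> c * s" by (simp add: algebra_simps)
    then show ?thesis using e l by linarith
  qed
qed

lemma spiral_diff_norm:
  "norm (spiral \<mu> r a - spiral \<mu> r b) = \<bar>r\<bar> * sqrt (2 - 2 * cos (a - b) + \<mu>\<^sup>2 * (a - b)\<^sup>2)"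
proof -
  have "norm (spiral \<mu> r a - spiral \<mu> r b) ^ 2 =
     (r * cos a - r * cos b)\<^sup>2 + (r * sin a - r * sin b)\<^sup>2 + (\<mu> * r * a - \<mu> * r * b)\<^sup>2"
    unfolding power2_norm_eq_inner inner_vec_def sum_3 spiral_def
    by (simp add: power2_eq_square)
  also have "\<dots> = r\<^sup>2 * (2 - 2 * cos (a - b) + \<mu>\<^sup>2 * (a - b)\<^sup>2)"
  proof -
    have h: "cos a * cos a + sin a * sin a = 1" "cos b * cos b + sin b * sin b = 1"
      by (simp_all add: sin_cos_squared_add3)
    show ?thesis using h unfolding cos_diff power2_eq_square by algebra
  qed
  finally have "norm (spiral \<mu> r a - spiral \<mu> r b) =
      sqrt (r\<^sup>2 * (2 - 2 * cos (a - b) + \<mu>\<^sup>2 * (a - b)\<^sup>2))"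
    by (metis norm_ge_zero real_sqrt_abs abs_of_nonneg real_sqrt_pow2_iff real_sqrt_unique)
  thus ?thesis by (simp add: real_sqrt_mult)
qed

lemma f_mono:
  fixes c a b :: real
  assumes c: "0 < c" and c1: "c < 1" and cp: "1 - c \<le> c * pi" and ab: "0 \<le> a" "a \<le> b"
  shows "2 - 2 * cos a + c * a\<^sup>2 \<le> 2 - 2 * cos b + c * b\<^sup>2"
proof (rule DERIV_nonneg_imp_increasing_open[OF ab(2)])
  fix x assume x: "a < x" "x < b"
  have "((\<lambda>x. 2 - 2 * cos x + c * x\<^sup>2) has_real_derivative (2 * sin x + c * (2 * x))) (at x)"
    by (auto intro!: derivative_eq_intros)
  moreover have "0 \<le> 2 * sin x + c * (2 * x)" using key_ineq[of x c] x ab c c1 cp by simp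
  ultimately show "\<exists>y. ((\<lambda>x. 2 - 2 * cos x + c * x\<^sup>2) has_real_derivative y) (at x) \<and> 0 \<le> y"
    by blast
next
  show "continuous_on {a..b} (\<lambda>x. 2 - 2 * cos x + c * x\<^sup>2)"
    by (intro continuous_intros)
qed

lemma spiral_alt:
  "spiral \<mu> r = (\<lambda>t. (r * cos t) *\<^sub>R axis 1 1 + (r * sin t) *\<^sub>R axis 2 1 + (\<mu> * r * t) *\<^sub>R axis 3 1)"
  by (rule ext) (simp add: spiral_def vec_eq_iff forall_3 axis_def)

lemma spiral_deriv:
  "(spiral \<mu> r has_vector_derivative
     vector [- r * sin t, r * cos t, \<mu> * r]) (at t)"
proof -
  have "(spiral \<mu> r has_vector_derivative
     (- r * sin t) *\<^sub>R axis 1 1 + (r * cos t) *\<^sub>R axis 2 1 + (\<mu> * r) *\<^sub>R axis 3 1) (at t)"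
    unfolding spiral_alt
    by (auto intro!: derivative_eq_intros simp: algebra_simps)
  moreover have "(- r * sin t) *\<^sub>R axis 1 1 + (r * cos t) *\<^sub>R axis 2 1 + (\<mu> * r) *\<^sub>R (axis 3 1 :: real^3)
     = vector [- r * sin t, r * cos t, \<mu> * r]"
    by (simp add: vec_eq_iff forall_3 axis_def)
  ultimately show ?thesis by simp
qed

theorem lemma4p4:
  shows "\<exists>\<mu>::real. 0 < \<mu> \<and> \<mu> < 1/2 \<and>
    (\<forall>r::real. r > 0 \<longrightarrow>
       self_expanded UNIV (spiral \<mu> r) \<and>
       (\<forall>lam::real. 0 \<le> lam \<and> lam < 1 \<longrightarrow> cone_property lam UNIV (spiral \<mu> r)))"
proof (intro exI[of _ "499/1000"] conjI allI impI)
  define \<mu> :: real where "\<mu> = 499/1000"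
  have c: "0 < \<mu>\<^sup>2" unfolding \<mu>_def by simp
  have c1: "\<mu>\<^sup>2 < 1" unfolding \<mu>_def by (simp add: power2_eq_square)
  have cp: "1 - \<mu>\<^sup>2 \<le> \<mu>\<^sup>2 * pi" 
  proof -
    have "3.14 \<le> pi" using pi_approx(1) by simp
    thus ?thesis unfolding \<mu>_def power2_eq_square by linarith
  qed
  fix r :: real assume r: "r > 0"
  show "self_expanded UNIV (spiral (499/1000) r)"
    unfolding self_expanded_def \<mu>_def[symmetric]
  proof (intro ballI impI)
    fix t1 t2 t3 :: real assume t: "t1 \<le> t2 \<and> t2 \<le> t3"
    have "2 - 2 * cos (t2 - t1) + \<mu>\<^sup>2 * (t2 - t1)\<^sup>2 \<le> 2 - 2 * cos (t3 - t1) + \<mu>\<^sup>2 * (t3 - t1)\<^sup>2"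
      using f_mono[OF c c1 cp, of "t2 - t1" "t3 - t1"] t by simp
    moreover have "cos (t1 - t2) = cos (t2 - t1)" "cos (t1 - t3) = cos (t3 - t1)"
      by (metis cos_minus minus_diff_eq)+
    moreover have "(t1 - t2)\<^sup>2 = (t2 - t1)\<^sup>2" "(t1 - t3)\<^sup>2 = (t3 - t1)\<^sup>2"
      by (simp_all add: power2_commute)
    ultimately show "norm (spiral \<mu> r t1 - spiral \<mu> r t2) \<le> norm (spiral \<mu> r t1 - spiral \<mu> r t3)"
      unfolding spiral_diff_norm using r by (simp add: mult_left_mono)
  qed
  fix lam :: real assume lam: "0 \<le> lam \<and> lam < 1"
  show "cone_property lam UNIV (spiral (499/1000) r)"
    unfolding cone_property_def \<mu>_def[symmetric]
  proof (intro conjI ballI impI)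
    fix t :: real
    have vd: "vector_derivative (spiral \<mu> r) (at t within UNIV) = vector [- r * sin t, r * cos t, \<mu> * r]"
      using spiral_deriv vector_derivative_at by fastforce
    show "spiral \<mu> r differentiable at t within UNIV"
      using spiral_deriv differentiable_def has_vector_derivative_def by blast
    show "vector_derivative (spiral \<mu> r) (at t within UNIV) \<noteq> 0"
    proof
      assume "vector_derivative (spiral \<mu> r) (at t within UNIV) = 0"
      hence "(vector [- r * sin t, r * cos t, \<mu> * r] :: real^3) $ 3 = 0" using vd by simp
      thus False using r unfolding \<mu>_def by simp
    qed
  next
    fix t \<tau> :: real assume tt: "t < \<tau>"
    have vd: "vector_derivative (spiral \<mu> r) (at \<tau> within UNIV) = vector [- r * sin \<tau>, r * cos \<tau>, \<mu> * r]"
      using spiral_deriv vector_derivative_at by fastforce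
    have "inner (vector_derivative (spiral \<mu> r) (at \<tau> within UNIV)) (spiral \<mu> r t - spiral \<mu> r \<tau>)
        = r\<^sup>2 * (sin (t - \<tau>) + \<mu>\<^sup>2 * (t - \<tau>))"
      unfolding vd inner_vec_def sum_3 spiral_def
      by (simp add: sin_diff power2_eq_square algebra_simps)
    also have "\<dots> = - (r\<^sup>2 * (sin (\<tau> - t) + \<mu>\<^sup>2 * (\<tau> - t)))"
    proof -
      have "sin (t - \<tau>) = - sin (\<tau> - t)" by (metis minus_diff_eq sin_minus)
      thus ?thesis by (simp add: algebra_simps)
    qed
    also have "\<dots> \<le> 0"
      using key_ineq[OF _ c c1 cp, of "\<tau> - t"] tt by simp
    also have "0 \<le> lam * norm (vector_derivative (spiral \<mu> r) (at \<tau> within UNIV)) * norm (spiral \<mu> r t - spiral \<mu> r \<tau>)"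
      using lam by simp
    finally show "inner (vector_derivative (spiral \<mu> r) (at \<tau> within UNIV)) (spiral \<mu> r t - spiral \<mu> r \<tau>)
        \<le> lam * norm (vector_derivative (spiral \<mu> r) (at \<tau> within UNIV)) * norm (spiral \<mu> r t - spiral \<mu> r \<tau>)" .
  qed
qed simp_all

end
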